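(* Let $D=[a_1,b_1]\times[a_2,b_2]\subset\mathbb R^2$ and let $\psi\in C(D\times\mathbb R^3)$ satisfy $\psi(s,y)=\psi(s,y+m)$ for all $m\in\mathbb Z^3$ and $(s,y)\in D\times\mathbb R^3$. Let $Y:[a_2,b_2]\to\mathbb R^3$ be a $C^1$ function such that for every $m\in\mathbb Z^3$ with $m\ne0$: (1) for all sufficiently small $\delta>0$, the set $\{s_2\in[a_2,b_2]:|m\cdot Y'(s_2)|\le\delta\}$ is contained in a finite union of intervals (their number may depend on $m$ and $\delta$), and (2) the sum of the lengths of these intervals tends to $0$ as $\delta\to0$. Then $$\lim_{\varepsilon\to0^+}\int_D\psi\Big(s,\frac{Y(s_2)}{\varepsilon}\Big)\,ds=\int_D\int_{[0,1]^3}\psi(s,y)\,dy\,ds,\qquad s=(s_1,s_2).$$ *)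

theory Defs
  imports "HOL-Analysis.Analysis"
begin

end

theory Submission
  imports Defs
begin



lemma norm_cis_diff_le: "norm (cis a - cis b) \<le> \<bar>a - b\<bar>"
proof -
  have e: "cis a - cis b = cis b * (cis (a - b) - 1)"
    by (simp add: right_diff_distrib cis_mult)
  have "(norm (cis (a-b) - 1))^2 = (cos (a-b) - 1)^2 + (sin (a-b))^2"
    by (simp add: cmod_power2)
  also have "\<dots> = 4 * (sin ((a-b)/2))^2"
  proof -
    have c0: "cos (a-b) = cos (2*((a-b)/2))" by (rule arg_cong[where f=cos]) simp
    have c: "cos (a-b) = 1 - 2 * (sin ((a-b)/2))^2" unfolding c0 by (rule cos_double_sin)
    show ?thesis using c sin_cos_squared_add[of "a-b"]
      by (simp add: power2_eq_square algebra_simps)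
  qed
  also have "\<dots> \<le> 4 * ((a-b)/2)^2"
    using abs_sin_x_le_abs_x[of "(a-b)/2"]
    by (metis abs_ge_zero mult_left_mono power_mono power2_abs zero_le_numeral)
  also have "\<dots> = \<bar>a - b\<bar>^2" by (simp add: power2_eq_square)
  finally have "norm (cis (a-b) - 1) \<le> \<bar>a - b\<bar>"
    by (meson abs_ge_zero power2_le_imp_le)
  then show ?thesis by (simp add: e norm_mult)
qed

lemma osc_exact:
  fixes u v lam eps alpha :: real
  assumes "u \<le> v" "lam \<noteq> 0" "eps > 0"
  shows "norm (integral {u..v} (\<lambda>t. cis ((alpha + lam * (t - u)) / eps))) \<le> 2 * eps / \<bar>lam\<bar>"
proof -
  define F where "F t = cis ((alpha + lam * (t - u)) / eps) * complex_of_real (eps / lam) * (- \<i>)" for t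
  have d: "(F has_vector_derivative cis ((alpha + lam * (t - u)) / eps)) (at t within {u..v})" for t
  proof -
    have "((\<lambda>t. (alpha + lam * (t - u)) / eps) has_derivative (\<lambda>x. x * (lam/eps))) (at t within {u..v})"
      using assms by (auto intro!: derivative_eq_intros simp: field_simps)
    from has_derivative_cis[OF this]
    have "((\<lambda>t. cis ((alpha + lam * (t - u)) / eps)) has_vector_derivative (lam/eps) *\<^sub>R (\<i> * cis ((alpha + lam * (t - u)) / eps))) (at t within {u..v})"
      by (simp add: has_vector_derivative_def)
    then have "(F has_vector_derivative ((lam/eps) *\<^sub>R (\<i> * cis ((alpha + lam * (t - u)) / eps))) * complex_of_real (eps / lam) * (- \<i>)) (at t within {u..v})"
      unfolding F_def by (intro has_vector_derivative_mult_left)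
    moreover have "((lam/eps) *\<^sub>R (\<i> * cis ((alpha + lam * (t - u)) / eps))) * complex_of_real (eps / lam) * (- \<i>) = cis ((alpha + lam * (t - u)) / eps)"
      using assms by (simp add: scaleR_conv_of_real field_simps)
    ultimately show ?thesis by simp
  qed
  have "((\<lambda>t. cis ((alpha + lam * (t - u)) / eps)) has_integral F v - F u) {u..v}"
    using assms(1) d by (intro fundamental_theorem_of_calculus) auto
  then have "integral {u..v} (\<lambda>t. cis ((alpha + lam * (t - u)) / eps)) = F v - F u"
    by (rule integral_unique)
  also have "norm (F v - F u) \<le> norm (F v) + norm (F u)" by (rule norm_triangle_ineq4)
  also have "\<dots> = 2 * eps / \<bar>lam\<bar>"
    using assms by (simp add: F_def norm_mult norm_divide)
  finally show ?thesis .
qed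

lemma lin_bound:
  fixes phi phi' :: "real \<Rightarrow> real"
  assumes "u \<le> t"
    and der: "\<And>x. x \<in> {u..t} \<Longrightarrow> (phi has_real_derivative phi' x) (at x within {u..t})"
    and bd: "\<And>x. x \<in> {u..t} \<Longrightarrow> \<bar>phi' x - lam\<bar> \<le> rho"
  shows "\<bar>phi t - phi u - lam * (t - u)\<bar> \<le> rho * (t - u)"
proof (cases "u = t")
  case True then show ?thesis by simp
next
  case False
  then have ut: "u < t" using assms(1) by simp
  have "\<exists>x\<in>{u<..<t}. (phi t - lam * t) - (phi u - lam * u) = (\<lambda>h. h * (phi' x - lam)) (t - u)"
  proof (rule mvt_simple[OF ut])
    fix x assume "u \<le> x" "x \<le> t"
    then have "(phi has_real_derivative phi' x) (at x within {u..t})" using der by auto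
    then show "((\<lambda>x. phi x - lam * x) has_derivative (\<lambda>h. h * (phi' x - lam))) (at x within {u..t})"
      unfolding has_field_derivative_def
      by (auto intro!: derivative_eq_intros simp: algebra_simps)
  qed
  then obtain x where x: "x \<in> {u<..<t}" "(phi t - lam * t) - (phi u - lam * u) = (t - u) * (phi' x - lam)"
    by (auto simp: mult.commute)
  have e: "phi t - phi u - lam * (t - u) = (t - u) * (phi' x - lam)"
    using x(2) by (simp add: algebra_simps)
  have "\<bar>phi t - phi u - lam * (t - u)\<bar> = (t - u) * \<bar>phi' x - lam\<bar>"
    unfolding e using ut by (simp add: abs_mult)
  also have "\<dots> \<le> (t - u) * rho"
    using bd[of x] x ut by (intro mult_left_mono) auto
  finally show ?thesis by (simp add: mult.commute)
qed

lemma good_piece: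
  fixes G :: "real \<Rightarrow> complex" and phi phi' :: "real \<Rightarrow> real"
  assumes uv: "u \<le> v" "v - u \<le> h" and eps: "eps > 0" and dl: "delta > 0" "delta \<le> \<bar>phi' u\<bar>"
    and contG: "continuous_on {u..v} G"
    and der: "\<And>x. x \<in> {u..v} \<Longrightarrow> (phi has_real_derivative phi' x) (at x within {u..v})"
    and GM: "\<And>x. x \<in> {u..v} \<Longrightarrow> norm (G x) \<le> M"
    and Gc: "\<And>x. x \<in> {u..v} \<Longrightarrow> norm (G x - G u) \<le> rG"
    and pc: "\<And>x. x \<in> {u..v} \<Longrightarrow> \<bar>phi' x - phi' u\<bar> \<le> rho"
    and nn: "0 \<le> rG" "0 \<le> rho" "0 \<le> M"
  shows "norm (integral {u..v} (\<lambda>t. G t * cis (phi t / eps))) \<le> M * 2 * eps / delta + h * (rG + M * rho * h / eps)"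
proof -
  define lam where "lam = phi' u"
  define f where "f t = G t * cis (phi t / eps)" for t
  define g where "g t = G u * cis ((phi u + lam * (t - u)) / eps)" for t
  have contphi: "continuous_on {u..v} phi" using der by (rule DERIV_continuous_on)
  have fi: "f integrable_on {u..v}"
    unfolding f_def using eps by (intro integrable_continuous_interval continuous_intros contG contphi) auto
  have gi: "g integrable_on {u..v}"
    unfolding g_def using eps by (intro integrable_continuous_interval continuous_intros) auto
  have lam0: "lam \<noteq> 0" using dl lam_def by auto
  have "integral {u..v} g = G u * integral {u..v} (\<lambda>t. cis ((phi u + lam * (t - u)) / eps))"
    unfolding g_def by simp
  then have n1: "norm (integral {u..v} g) \<le> M * (2 * eps / \<bar>lam\<bar>)"
  proof -
    assume e: "integral {u..v} g = G u * integral {u..v} (\<lambda>t. cis ((phi u + lam * (t - u)) / eps))"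
    have "norm (G u) * norm (integral {u..v} (\<lambda>t. cis ((phi u + lam * (t - u)) / eps))) \<le> M * (2 * eps / \<bar>lam\<bar>)"
      using osc_exact[OF uv(1) lam0 eps, of "phi u"] GM[of u] uv(1) nn by (intro mult_mono) auto
    then show ?thesis unfolding e norm_mult .
  qed
  also have "\<dots> \<le> M * (2 * eps / delta)"
    using dl eps nn lam_def by (intro mult_left_mono divide_left_mono) auto
  finally have n1': "norm (integral {u..v} g) \<le> M * 2 * eps / delta" by simp
  have pw: "norm (f t - g t) \<le> rG + M * rho * h / eps" if t: "t \<in> {u..v}" for t
  proof -
    have "f t - g t = (G t - G u) * cis (phi t / eps) + G u * (cis (phi t / eps) - cis ((phi u + lam * (t - u)) / eps))"
      by (simp add: f_def g_def algebra_simps)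
    then have "norm (f t - g t) \<le> norm (G t - G u) + norm (G u) * norm (cis (phi t / eps) - cis ((phi u + lam * (t - u)) / eps))"
      by (metis norm_cis mult.right_neutral norm_mult norm_triangle_ineq)
    also have "norm (cis (phi t / eps) - cis ((phi u + lam * (t - u)) / eps)) \<le> \<bar>phi t / eps - (phi u + lam * (t - u)) / eps\<bar>"
      by (rule norm_cis_diff_le)
    also have "\<bar>phi t / eps - (phi u + lam * (t - u)) / eps\<bar> = \<bar>phi t - phi u - lam * (t - u)\<bar> / eps"
      using eps by (simp add: field_simps abs_divide)
    also have "\<bar>phi t - phi u - lam * (t - u)\<bar> \<le> rho * (t - u)"
    proof (rule lin_bound)
      show "u \<le> t" using t by simp
      fix x assume x: "x \<in> {u..t}"
      then have "x \<in> {u..v}" using t by auto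
      then show "(phi has_real_derivative phi' x) (at x within {u..t})"
        using der by (meson DERIV_subset atLeastatMost_subset_iff order_refl t atLeastAtMost_iff)
      show "\<bar>phi' x - lam\<bar> \<le> rho" using pc \<open>x \<in> {u..v}\<close> lam_def by auto
    qed
    also have "rho * (t - u) \<le> rho * h" using t uv nn by (intro mult_left_mono) auto
    finally have "norm (f t - g t) \<le> norm (G t - G u) + norm (G u) * (rho * h / eps)"
      using eps by (simp add: divide_right_mono mult_left_mono)
    also have "\<dots> \<le> rG + M * (rho * h / eps)"
      using Gc[OF t] GM[of u] uv nn eps by (intro add_mono mult_right_mono) auto
    finally show ?thesis by simp
  qed
  have hi: "((\<lambda>t. f t - g t) has_integral integral {u..v} (\<lambda>t. f t - g t)) (cbox u v)"
    by (auto intro!: integrable_integral integrable_diff fi gi)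
  have "norm (integral {u..v} (\<lambda>t. f t - g t)) \<le> (rG + M * rho * h / eps) * (v - u)"
    using has_integral_bound[OF _ hi, of "rG + M * rho * h / eps"] pw nn eps uv
    by (auto simp: content_real)
  also have "\<dots> \<le> (rG + M * rho * h / eps) * h"
    using uv nn eps by (intro mult_left_mono) auto
  finally have n2: "norm (integral {u..v} (\<lambda>t. f t - g t)) \<le> h * (rG + M * rho * h / eps)"
    by (simp add: mult.commute)
  have "integral {u..v} f = integral {u..v} g + integral {u..v} (\<lambda>t. f t - g t)"
    using integral_diff[OF fi gi] by simp
  then have "norm (integral {u..v} f) \<le> norm (integral {u..v} g) + norm (integral {u..v} (\<lambda>t. f t - g t))"
    by (simp add: norm_triangle_ineq)
  then show ?thesis using n1' n2 unfolding f_def by linarith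
qed

lemma count_grid:
  fixes a c d h :: real
  assumes h: "h > 0" and cd: "c \<le> d"
  shows "real (card {k. k < n \<and> c \<le> a + real k * h \<and> a + real k * h \<le> d}) \<le> (d - c) / h + 1"
proof (cases "{k. k < n \<and> c \<le> a + real k * h \<and> a + real k * h \<le> d} = {}")
  case True
  show ?thesis unfolding True using h cd by simp
next
  case False
  define S where "S = {k. k < n \<and> c \<le> a + real k * h \<and> a + real k * h \<le> d}"
  have fin: "finite S" unfolding S_def by simp
  have ne: "S \<noteq> {}" using False S_def by simp
  define k0 where "k0 = Min S"
  define k1 where "k1 = Max S"
  have k0: "k0 \<in> S" using fin ne k0_def by simp
  have k1: "k1 \<in> S" using fin ne k1_def by simp
  have sub: "S \<subseteq> {k0..k1}" using fin k0_def k1_def by auto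
  have "card S \<le> card {k0..k1}" using sub by (intro card_mono) auto
  also have "\<dots> = Suc k1 - k0" by simp
  finally have cS: "real (card S) \<le> real (Suc k1 - k0)" by simp
  have le: "k0 \<le> k1" using sub k0 by auto
  have "(real k1 - real k0) * h \<le> d - c" using k0 k1 unfolding S_def by (simp add: algebra_simps)
  then have "real k1 - real k0 \<le> (d - c) / h" using h by (simp add: field_simps)
  then show ?thesis using cS le S_def by (simp add: of_nat_diff)
qed

lemma integral_grid_sum:
  fixes f :: "real \<Rightarrow> 'a::banach"
  assumes "h \<ge> 0" "f integrable_on {a..a + real n * h}"
  shows "integral {a..a + real n * h} f = (\<Sum>k<n. integral {a + real k * h..a + real (Suc k) * h} f)"
  using assms
proof (induction n)
  case 0 then show ?case by simp
next
  case (Suc n)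
  have sub: "{a..a + real n * h} \<subseteq> {a..a + real (Suc n) * h}" using Suc.prems by (auto simp: algebra_simps)
  have "integral {a..a + real n * h} f + integral {a + real n * h..a + real (Suc n) * h} f = integral {a..a + real (Suc n) * h} f"
    using Suc.prems by (intro Henstock_Kurzweil_Integration.integral_combine) (auto simp: algebra_simps)
  moreover have "integral {a..a + real n * h} f = (\<Sum>k<n. integral {a + real k * h..a + real (Suc k) * h} f)"
    using Suc.prems sub by (intro Suc.IH) (auto intro: integrable_on_subinterval)
  ultimately show ?case by simp
qed

lemma grid_bound:
  fixes G :: "real \<Rightarrow> complex" and phi phi' :: "real \<Rightarrow> real" and c d :: "nat \<Rightarrow> real"
  assumes ab: "a < b" "n > 0" and hdef: "h = (b - a) / n" and eps: "eps > 0" and dl: "delta > 0"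
    and contG: "continuous_on {a..b} G"
    and der: "\<And>x. x \<in> {a..b} \<Longrightarrow> (phi has_real_derivative phi' x) (at x within {a..b})"
    and GM: "\<And>x. x \<in> {a..b} \<Longrightarrow> norm (G x) \<le> M"
    and Gc: "\<And>x y. x \<in> {a..b} \<Longrightarrow> y \<in> {a..b} \<Longrightarrow> \<bar>x - y\<bar> \<le> h \<Longrightarrow> norm (G x - G y) \<le> rG"
    and pc: "\<And>x y. x \<in> {a..b} \<Longrightarrow> y \<in> {a..b} \<Longrightarrow> \<bar>x - y\<bar> \<le> h \<Longrightarrow> \<bar>phi' x - phi' y\<bar> \<le> rho"
    and nn: "0 \<le> rG" "0 \<le> rho" "0 \<le> M"
    and cd: "\<And>i. i < N \<Longrightarrow> c i \<le> d i"
    and cover: "{t \<in> {a..b}. \<bar>phi' t\<bar> < delta} \<subseteq> (\<Union>i<N. {c i..d i})"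
  shows "norm (integral {a..b} (\<lambda>t. G t * cis (phi t / eps)))
     \<le> real n * (M * 2 * eps / delta + h * (rG + M * rho * h / eps)) + M * h * (\<Sum>i<N. (d i - c i) / h + 1)"
proof -
  define f where "f t = G t * cis (phi t / eps)" for t
  define t where "t k = a + real k * h" for k
  define B where "B = M * 2 * eps / delta + h * (rG + M * rho * h / eps)"
  define Bad where "Bad = {k. k < n \<and> \<bar>phi' (t k)\<bar> < delta}"
  have h0: "h > 0" using ab hdef by simp
  have tn: "t n = b" using ab hdef t_def by simp
  have B0: "B \<ge> 0" using nn h0 eps dl by (simp add: B_def)
  have contphi: "continuous_on {a..b} phi" using der by (rule DERIV_continuous_on)
  have fi: "f integrable_on {a..b}"
    unfolding f_def using eps by (intro integrable_continuous_interval continuous_intros contG contphi) auto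
  have tk: "a \<le> t k" "t (Suc k) \<le> b" "t k \<le> t (Suc k)" "t (Suc k) - t k = h" if "k < n" for k
  proof -
    show "a \<le> t k" using h0 t_def by simp
    have "real (Suc k) * h \<le> real n * h" using that h0 by (intro mult_right_mono) auto
    then show "t (Suc k) \<le> b" using tn t_def by simp
    show "t (Suc k) - t k = h" by (simp add: t_def algebra_simps)
    then show "t k \<le> t (Suc k)" using h0 by simp
  qed
  have sum: "integral {a..b} f = (\<Sum>k<n. integral {t k..t (Suc k)} f)"
    using integral_grid_sum[of h f a n] h0 fi tn unfolding t_def by simp
  have piece: "norm (integral {t k..t (Suc k)} f) \<le> B + (if k \<in> Bad then M * h else 0)" if k: "k < n" for k
  proof (cases "k \<in> Bad")
    case True
    have hi: "(f has_integral integral {t k..t (Suc k)} f) (cbox (t k) (t (Suc k)))"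
      using fi tk[OF k] by (auto intro!: integrable_integral intro: integrable_on_subinterval)
    have "norm (integral {t k..t (Suc k)} f) \<le> M * (t (Suc k) - t k)"
      using has_integral_bound[OF nn(3) hi] GM tk[OF k]
      by (auto simp: content_real f_def norm_mult)
    then show ?thesis using True tk[OF k] B0 by simp
  next
    case False
    have sub: "{t k..t (Suc k)} \<subseteq> {a..b}" using tk[OF k] by auto
    have "norm (integral {t k..t (Suc k)} f) \<le> B"
      unfolding f_def B_def
    proof (rule good_piece)
      show "t k \<le> t (Suc k)" "t (Suc k) - t k \<le> h" using tk[OF k] by auto
      show "eps > 0" "delta > 0" by (fact eps dl)+
      show "delta \<le> \<bar>phi' (t k)\<bar>" using False k Bad_def by auto
      show "continuous_on {t k..t (Suc k)} G" using contG sub by (rule continuous_on_subset)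
      fix x assume x: "x \<in> {t k..t (Suc k)}"
      then have xab: "x \<in> {a..b}" using sub by auto
      have tkab: "t k \<in> {a..b}" using tk[OF k] by auto
      have dist: "\<bar>x - t k\<bar> \<le> h" using x tk[OF k] by auto
      show "(phi has_real_derivative phi' x) (at x within {t k..t (Suc k)})"
        using der[OF xab] sub by (rule DERIV_subset)
      show "norm (G x) \<le> M" using GM xab .
      show "norm (G x - G (t k)) \<le> rG" using Gc[OF xab tkab dist] .
      show "\<bar>phi' x - phi' (t k)\<bar> \<le> rho" using pc[OF xab tkab dist] .
    qed (use nn in auto)
    then show ?thesis using False by simp
  qed
  have "norm (integral {a..b} f) \<le> (\<Sum>k<n. norm (integral {t k..t (Suc k)} f))"
    unfolding sum by (rule norm_sum)
  also have "\<dots> \<le> (\<Sum>k<n. B + (if k \<in> Bad then M * h else 0))"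
    by (intro sum_mono piece) simp
  also have "\<dots> = real n * B + M * h * real (card Bad)"
  proof -
    have "(\<Sum>k<n. (if k \<in> Bad then M * h else 0)) = (\<Sum>k\<in>Bad. M * h)"
      by (simp add: sum.If_cases Bad_def Int_def)
    then show ?thesis by (simp add: sum.distrib)
  qed
  also have "real (card Bad) \<le> (\<Sum>i<N. (d i - c i) / h + 1)"
  proof -
    have "Bad \<subseteq> (\<Union>i<N. {k. k < n \<and> c i \<le> a + real k * h \<and> a + real k * h \<le> d i})"
    proof
      fix k assume "k \<in> Bad"
      then have k: "k < n" "\<bar>phi' (t k)\<bar> < delta" using Bad_def by auto
      then have "t k \<in> {a..b}" using tk[of k] by auto
      then obtain i where "i < N" "t k \<in> {c i..d i}" using cover k by blast
      then show "k \<in> (\<Union>i<N. {k. k < n \<and> c i \<le> a + real k * h \<and> a + real k * h \<le> d i})"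
        using k t_def by auto
    qed
    then have "card Bad \<le> card (\<Union>i<N. {k. k < n \<and> c i \<le> a + real k * h \<and> a + real k * h \<le> d i})"
      by (intro card_mono) auto
    also have "\<dots> \<le> (\<Sum>i<N. card {k. k < n \<and> c i \<le> a + real k * h \<and> a + real k * h \<le> d i})"
      by (rule card_UN_le) simp
    finally have "real (card Bad) \<le> real (\<Sum>i<N. card {k. k < n \<and> c i \<le> a + real k * h \<and> a + real k * h \<le> d i})"
      by (simp only: of_nat_le_iff)
    also have "\<dots> = (\<Sum>i<N. real (card {k. k < n \<and> c i \<le> a + real k * h \<and> a + real k * h \<le> d i}))"
      by (rule of_nat_sum)
    also have "\<dots> \<le> (\<Sum>i<N. (d i - c i) / h + 1)"
      by (intro sum_mono count_grid h0 cd) simp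
    finally show ?thesis .
  qed
  then have "real n * B + M * h * real (card Bad) \<le> real n * B + M * h * (\<Sum>i<N. (d i - c i) / h + 1)"
    using nn h0 by (intro add_left_mono mult_left_mono) auto
  finally show ?thesis unfolding f_def B_def .
qed

lemma osc_limit:
  fixes G :: "real \<Rightarrow> complex" and phi phi' :: "real \<Rightarrow> real"
    and N :: "real \<Rightarrow> nat" and c d :: "real \<Rightarrow> nat \<Rightarrow> real"
  assumes ab: "a < b" and contG: "continuous_on {a..b} G"
    and der: "\<And>x. x \<in> {a..b} \<Longrightarrow> (phi has_real_derivative phi' x) (at x within {a..b})"
    and contp: "continuous_on {a..b} phi'"
    and kap: "kappa > 0" and d0: "delta0 > 0"
    and cov: "\<And>dl. dl \<in> {0<..<delta0} \<Longrightarrow> (\<forall>i<N dl. c dl i \<le> d dl i) \<and>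
               {t \<in> {a..b}. \<bar>phi' t\<bar> \<le> kappa * dl} \<subseteq> (\<Union>i<N dl. {c dl i..d dl i})"
    and lim: "((\<lambda>dl. \<Sum>i<N dl. d dl i - c dl i) \<longlongrightarrow> 0) (at_right 0)"
  shows "((\<lambda>eps. integral {a..b} (\<lambda>t. G t * cis (phi t / eps))) \<longlongrightarrow> 0) (at_right 0)"
proof -
  define L where "L = b - a"
  have L0: "L > 0" using ab L_def by simp
  obtain M0 where M0: "\<And>x. x \<in> {a..b} \<Longrightarrow> norm (G x) \<le> M0"
    using compact_continuous_image[OF contG compact_Icc] unfolding bounded_iff[symmetric]
    by (metis bounded_iff compact_imp_bounded image_eqI)
  define M where "M = \<bar>M0\<bar> + 1"
  have M: "M > 0" "\<And>x. x \<in> {a..b} \<Longrightarrow> norm (G x) \<le> M"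
    using M0 by (auto simp: M_def) (smt (verit) M0)
  show ?thesis
  unfolding tendsto_iff dist_norm
  proof (intro allI impI)
    fix eta :: real assume eta: "eta > 0"
    define e where "e = eta / 8"
    have e: "e > 0" using eta e_def by simp
    have "eventually (\<lambda>dl. dist (\<Sum>i<N dl. d dl i - c dl i) 0 < e / M) (at_right 0)"
      using lim e M by (simp add: tendsto_iff)
    then obtain b1 where b1: "b1 > 0" "\<And>y. y > 0 \<Longrightarrow> y < b1 \<Longrightarrow> \<bar>\<Sum>i<N y. d y i - c y i\<bar> < e / M"
      unfolding eventually_at_right_field by auto
    define dl where "dl = min b1 delta0 / 2"
    have dl: "dl > 0" "dl < delta0" "dl < b1" using b1 d0 dl_def by auto
    define Nd where "Nd = N dl"
    define Sd where "Sd = (\<Sum>i<Nd. d dl i - c dl i)"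
    have Sd: "M * Sd \<le> e"
    proof -
      have "M * Sd \<le> M * \<bar>Sd\<bar>" using M by (intro mult_left_mono) auto
      also have "\<dots> < e" using b1(2)[of dl] dl M unfolding Sd_def Nd_def by (simp add: field_simps)
      finally show ?thesis by simp
    qed
    have cd: "\<And>i. i < Nd \<Longrightarrow> c dl i \<le> d dl i"
      and cov': "{t \<in> {a..b}. \<bar>phi' t\<bar> < kappa * dl} \<subseteq> (\<Union>i<Nd. {c dl i..d dl i})"
      using cov[of dl] dl unfolding Nd_def by auto
    define dg where "dg = kappa * dl"
    have dg: "dg > 0" using kap dl dg_def by simp
    define K where "K = 2 * M * L / (dg * e)"
    have K: "K > 0" using M L0 dg e K_def by simp
    have T1a: "2 * M * L / (K * dg) = e" unfolding K_def using M L0 dg e by (simp add: field_simps)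
    define rG where "rG = e / L"
    define rho where "rho = e / (L * M * K)"
    have rG: "rG > 0" and rho: "rho > 0" using e L0 M K rG_def rho_def by auto
    obtain s1 where s1: "s1 > 0" "\<And>x y. x \<in> {a..b} \<Longrightarrow> y \<in> {a..b} \<Longrightarrow> dist y x < s1 \<Longrightarrow> dist (G y) (G x) < rG"
      using compact_uniformly_continuous[OF contG compact_Icc] rG unfolding uniformly_continuous_on_def by metis
    obtain s2 where s2: "s2 > 0" "\<And>x y. x \<in> {a..b} \<Longrightarrow> y \<in> {a..b} \<Longrightarrow> dist y x < s2 \<Longrightarrow> dist (phi' y) (phi' x) < rho"
      using compact_uniformly_continuous[OF contp compact_Icc] rho unfolding uniformly_continuous_on_def by metis
    define e0 where "e0 = Min {s1 / K, s2 / K, e * dg / (2 * M), e / (M * (real Nd + 1) * K)}"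
    have e0: "e0 > 0" unfolding e0_def using s1 s2 K e dg M by (simp add: Min_gr_iff)
    show "eventually (\<lambda>eps. norm (integral {a..b} (\<lambda>t. G t * cis (phi t / eps)) - 0) < eta) (at_right 0)"
      unfolding eventually_at_right_field
    proof (intro exI[of _ e0] conjI allI impI)
      show "0 < e0" by (fact e0)
      fix eps :: real assume eps: "0 < eps" "eps < e0"
      have epsb: "eps < s1 / K" "eps < s2 / K" "eps < e * dg / (2 * M)" "eps < e / (M * (real Nd + 1) * K)"
        using eps unfolding e0_def by (simp_all add: Min_gr_iff)
      define x where "x = L / (K * eps)"
      have x0: "x > 0" using L0 K eps x_def by simp
      define n where "n = nat \<lceil>x\<rceil>"
      have n: "real n \<ge> x" "real n < x + 1" using x0 n_def by linarith+
      have n0: "n > 0" using n x0 by simp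
      define h where "h = (b - a) / n"
      have h0: "h > 0" using n0 ab h_def by simp
      have hK: "h \<le> K * eps"
      proof -
        have "L / (K * eps) \<le> real n" using n x_def by simp
        then have "L \<le> real n * (K * eps)" using K eps by (simp add: field_simps)
        moreover have "h * real n = L" using n0 h_def L_def by simp
        moreover have "(K * eps) * real n = real n * (K * eps)" by simp
        ultimately have "h * real n \<le> (K * eps) * real n" by linarith
        then show ?thesis using n0 by (simp add: mult_le_cancel_right)
      qed
      have nh: "real n * h = L" using n0 h_def L_def by simp
      have hs1: "h < s1" and hs2: "h < s2"
        using hK epsb K by (simp_all add: field_simps)
      have bound: "norm (integral {a..b} (\<lambda>t. G t * cis (phi t / eps)))
        \<le> real n * (M * 2 * eps / dg + h * (rG + M * rho * h / eps)) + M * h * (\<Sum>i<Nd. (d dl i - c dl i) / h + 1)"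
      proof (rule grid_bound[OF ab n0 h_def eps(1) dg contG der _ _ _ _ _ _ _ cov'[folded dg_def]])
        show "\<And>x. x \<in> {a..b} \<Longrightarrow> norm (G x) \<le> M" by (fact M(2))
        show "norm (G x - G y) \<le> rG" if "x \<in> {a..b}" "y \<in> {a..b}" "\<bar>x - y\<bar> \<le> h" for x y
          using s1(2)[OF that(2,1)] that(3) hs1 by (simp add: dist_norm)
        show "\<bar>phi' x - phi' y\<bar> \<le> rho" if "x \<in> {a..b}" "y \<in> {a..b}" "\<bar>x - y\<bar> \<le> h" for x y
          using s2(2)[OF that(2,1)] that(3) hs2 by (simp add: dist_norm)
      qed (use rG rho M cd in auto)
      have t1: "real n * (M * 2 * eps / dg) \<le> 2 * e"
      proof -
        have "real n * (M * 2 * eps / dg) \<le> (x + 1) * (M * 2 * eps / dg)"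
          using n M eps dg by (intro mult_right_mono) auto
        also have "\<dots> = 2 * M * L / (K * dg) + M * 2 * eps / dg"
          using K eps dg by (simp add: x_def field_simps)
        also have "M * 2 * eps / dg \<le> e" using epsb(3) M dg by (simp add: field_simps)
        finally show ?thesis using T1a by simp
      qed
      have t2: "real n * (h * rG) = e"
      proof -
        have "real n * (h * rG) = (real n * h) * rG" by simp
        also have "\<dots> = e" using nh L0 rG_def by simp
        finally show ?thesis .
      qed
      have t3: "real n * (h * (M * rho * h / eps)) \<le> e"
      proof -
        have "real n * (h * (M * rho * h / eps)) = L * M * rho * (h / eps)" using nh by simp
        also have "\<dots> \<le> L * M * rho * K"
          using hK eps L0 M rho by (intro mult_left_mono) (auto simp: field_simps)
        also have "\<dots> = e" using L0 M K rho_def by simp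
        finally show ?thesis .
      qed
      have t4: "M * h * (\<Sum>i<Nd. (d dl i - c dl i) / h + 1) = M * Sd + M * real Nd * h"
      proof -
        have i: "h * ((d dl i - c dl i) / h + 1) = (d dl i - c dl i) + h" for i using h0 by (simp add: field_simps)
        have "M * h * (\<Sum>i<Nd. (d dl i - c dl i) / h + 1) = M * (\<Sum>i<Nd. h * ((d dl i - c dl i) / h + 1))"
          by (simp add: sum_distrib_left mult.assoc)
        also have "\<dots> = M * (\<Sum>i<Nd. (d dl i - c dl i) + h)" by (simp only: i)
        also have "\<dots> = M * (Sd + real Nd * h)" by (simp add: sum.distrib Sd_def)
        finally show ?thesis by (simp add: algebra_simps)
      qed
      have t5: "M * real Nd * h \<le> e"
      proof -
        have "M * real Nd * h \<le> M * (real Nd + 1) * (K * eps)"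
          using M hK h0 by (intro mult_mono) auto
        also have "\<dots> \<le> e"
        proof -
          have Q: "M * (real Nd + 1) * K > 0" using M K by simp
          have "eps * (M * (real Nd + 1) * K) < e" using epsb(4) Q by (simp add: pos_less_divide_eq)
          then show ?thesis by (simp add: algebra_simps)
        qed
        finally show ?thesis .
      qed
      have "real n * (M * 2 * eps / dg + h * (rG + M * rho * h / eps)) =
         real n * (M * 2 * eps / dg) + real n * (h * rG) + real n * (h * (M * rho * h / eps))"
        by (simp add: algebra_simps)
      with bound t1 t2 t3 t4 t5 Sd have "norm (integral {a..b} (\<lambda>t. G t * cis (phi t / eps))) \<le> 6 * e"
        by linarith
      then show "norm (integral {a..b} (\<lambda>t. G t * cis (phi t / eps)) - 0) < eta"
        using e_def eta by simp
    qed
  qed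
qed




type_synonym tlist = "((real \<times> real \<Rightarrow> complex) \<times> (real^3)) list"

definition tsum :: "tlist \<Rightarrow> real \<times> real \<Rightarrow> real^3 \<Rightarrow> complex" where
  "tsum xs s y = (\<Sum>p\<leftarrow>xs. fst p s * cis (2 * pi * (snd p \<bullet> y)))"

definition tvalid :: "(real \<times> real) set \<Rightarrow> tlist \<Rightarrow> bool" where
  "tvalid D xs \<longleftrightarrow> (\<forall>p\<in>set xs. continuous_on D (fst p) \<and> (\<forall>i. snd p $ i \<in> \<int>))"

definition tmean :: "tlist \<Rightarrow> real \<times> real \<Rightarrow> complex" where
  "tmean xs s = (\<Sum>p\<leftarrow>xs. if snd p = 0 then fst p s else 0)"

definition tprod :: "tlist \<Rightarrow> tlist \<Rightarrow> tlist" where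
  "tprod xs ys = concat (map (\<lambda>p. map (\<lambda>q. (\<lambda>s. fst p s * fst q s, snd p + snd q)) ys) xs)"

lemma tsum_Nil [simp]: "tsum [] s y = 0" by (simp add: tsum_def)
lemma tsum_Cons [simp]: "tsum (p # xs) s y = fst p s * cis (2 * pi * (snd p \<bullet> y)) + tsum xs s y"
  by (simp add: tsum_def)
lemma tsum_append [simp]: "tsum (xs @ ys) s y = tsum xs s y + tsum ys s y"
  by (simp add: tsum_def)
lemma tvalid_append [simp]: "tvalid D (xs @ ys) \<longleftrightarrow> tvalid D xs \<and> tvalid D ys"
  by (auto simp: tvalid_def)
lemma tvalid_Cons [simp]: "tvalid D (p # xs) \<longleftrightarrow> continuous_on D (fst p) \<and> (\<forall>i. snd p $ i \<in> \<int>) \<and> tvalid D xs"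
  by (auto simp: tvalid_def)
lemma tvalid_Nil [simp]: "tvalid D []" by (simp add: tvalid_def)

lemma cis_inner_add: "cis (2 * pi * ((u + w) \<bullet> y)) = cis (2 * pi * (u \<bullet> y)) * cis (2 * pi * (w \<bullet> y))"
  by (simp add: inner_add_left distrib_left cis_mult)

lemma tsum_tprod: "tsum (tprod xs ys) s y = tsum xs s y * tsum ys s y"
proof (induction xs)
  case Nil then show ?case by (simp add: tprod_def)
next
  case (Cons p xs)
  have "tprod (p # xs) ys = map (\<lambda>q. (\<lambda>s. fst p s * fst q s, snd p + snd q)) ys @ tprod xs ys"
    by (simp add: tprod_def)
  moreover have "tsum (map (\<lambda>q. (\<lambda>s. fst p s * fst q s, snd p + snd q)) ys) s y
      = fst p s * cis (2 * pi * (snd p \<bullet> y)) * tsum ys s y"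
  proof (induction ys)
    case Nil then show ?case by (simp add: tsum_def)
  next
    case (Cons q ys)
    have "tsum (map (\<lambda>q. (\<lambda>s. fst p s * fst q s, snd p + snd q)) (q # ys)) s y
      = fst p s * fst q s * cis (2 * pi * ((snd p + snd q) \<bullet> y)) + tsum (map (\<lambda>q. (\<lambda>s. fst p s * fst q s, snd p + snd q)) ys) s y"
      by simp
    also have "\<dots> = fst p s * fst q s * (cis (2 * pi * (snd p \<bullet> y)) * cis (2 * pi * (snd q \<bullet> y))) + fst p s * cis (2 * pi * (snd p \<bullet> y)) * tsum ys s y"
      by (simp only: cis_inner_add Cons.IH)
    finally show ?case by (simp add: algebra_simps)
  qed
  ultimately show ?case using Cons by (simp add: algebra_simps)
qed

lemma tvalid_tprod: "tvalid D xs \<Longrightarrow> tvalid D ys \<Longrightarrow> tvalid D (tprod xs ys)"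
  by (auto simp: tvalid_def tprod_def intro!: continuous_on_mult Ints_add)





lemma One_nth [simp]: "(One::real^'n) $ i = 1"
proof -
  have "(One::real^'n) \<bullet> axis i 1 = 1" by (rule inner_sum_Basis) simp
  then show ?thesis by (simp only: inner_axis inner_real_def mult_1_right)
qed
lemma One_nth' [simp]: "(\<Sum>x\<in>(Basis::(real^'n) set). x $ i) = 1"
  using One_nth[of i] by (simp add: sum_component)

lemma cube_sets12: fixes j :: 3 assumes tau: "0 \<le> tau" "tau \<le> 1"
  shows "cbox (axis j tau) (One + axis j tau) \<inter> {x. x \<bullet> axis j 1 \<le> 1} = cbox (axis j tau) (One::real^3)"
        "cbox (axis j tau) (One + axis j tau) \<inter> {x. x \<bullet> axis j 1 \<ge> 1} = cbox (0 + axis j 1) ((One + axis j tau - axis j 1) + axis j 1)"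
proof -
  have ij: "x \<bullet> axis j 1 = x $ j" for x :: "real^3" by (simp add: inner_axis)
  have ax: "axis j t $ i = (if i = j then t else 0)" for t :: real and i by (simp add: axis_def)
  show "cbox (axis j tau) (One + axis j tau) \<inter> {x. x \<bullet> axis j 1 \<le> 1} = cbox (axis j tau) (One::real^3)"
    unfolding set_eq_iff mem_box_cart Int_iff mem_Collect_eq ij
    using tau by (auto simp: ax)
  show "cbox (axis j tau) (One + axis j tau) \<inter> {x. x \<bullet> axis j 1 \<ge> 1} = cbox (0 + axis j 1) ((One + axis j tau - axis j 1) + axis j 1)"
    unfolding set_eq_iff mem_box_cart Int_iff mem_Collect_eq ij
    using tau by (auto simp: ax)
qed

lemma cube_sets34: fixes j :: 3 assumes tau: "0 \<le> tau" "tau \<le> 1"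
  shows   "cbox 0 One \<inter> {x. x \<bullet> axis j 1 \<le> tau} = cbox 0 (One + axis j tau - axis j (1::real))"
        "cbox 0 One \<inter> {x. x \<bullet> axis j 1 \<ge> tau} = cbox (axis j tau) (One::real^3)"
proof -
  have ij: "x \<bullet> axis j 1 = x $ j" for x :: "real^3" by (simp add: inner_axis)
  have c1: "(One + axis j tau - axis j 1 :: real^3) $ i = (if i = j then tau else 1)" for i
    by (simp add: axis_def)
  have c2: "(axis j tau :: real^3) $ i = (if i = j then tau else 0)" for i
    by (simp add: axis_def)
  have ax: "(axis j t :: real^3) $ i = (if i = j then t else 0)" for i t
    by (simp add: axis_def)
  show "cbox 0 One \<inter> {x. x \<bullet> axis j 1 \<le> tau} = cbox 0 (One + axis j tau - axis j (1::real))"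
  proof (intro set_eqI iffI)
    fix x :: "real^3"
    assume "x \<in> cbox 0 One \<inter> {x. x \<bullet> axis j 1 \<le> tau}"
    then have a: "\<And>i. 0 \<le> x $ i \<and> x $ i \<le> 1" "x $ j \<le> tau" by (auto simp: mem_box_cart ij)
    show "x \<in> cbox 0 (One + axis j tau - axis j 1)" using a by (auto simp: mem_box_cart ax)
  next
    fix x :: "real^3"
    assume xin: "x \<in> cbox 0 (One + axis j tau - axis j 1)"
    have a: "0 \<le> x $ i \<and> x $ i \<le> (if i = j then tau else 1)" for i
      using xin[unfolded mem_box_cart, rule_format, of i] by (auto simp: ax)
    have "x $ i \<le> 1" for i using a[of i] tau by (auto split: if_splits)
    moreover have "x $ j \<le> tau" using a[of j] by simp
    ultimately show "x \<in> cbox 0 One \<inter> {x. x \<bullet> axis j 1 \<le> tau}" using a by (auto simp: mem_box_cart ij)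
  qed
  show "cbox 0 One \<inter> {x. x \<bullet> axis j 1 \<ge> tau} = cbox (axis j tau) (One::real^3)"
  proof (intro set_eqI iffI)
    fix x :: "real^3"
    assume "x \<in> cbox 0 One \<inter> {x. x \<bullet> axis j 1 \<ge> tau}"
    then have a: "\<And>i. 0 \<le> x $ i \<and> x $ i \<le> 1" "tau \<le> x $ j" by (auto simp: mem_box_cart ij)
    show "x \<in> cbox (axis j tau) One" unfolding mem_box_cart c2 using a by auto
  next
    fix x :: "real^3"
    assume xin: "x \<in> cbox (axis j tau) One"
    have a: "(if i = j then tau else 0) \<le> x $ i \<and> x $ i \<le> 1" for i
      using xin[unfolded mem_box_cart, rule_format, of i] by (auto simp: ax)
    have "0 \<le> x $ i" for i using a[of i] tau by (auto split: if_splits)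
    moreover have "tau \<le> x $ j" using a[of j] by simp
    ultimately show "x \<in> cbox 0 One \<inter> {x. x \<bullet> axis j 1 \<ge> tau}" using a by (auto simp: mem_box_cart ij)
  qed
qed

lemma cube_shift:
  fixes g :: "real^3 \<Rightarrow> complex"
  assumes cont: "continuous_on UNIV g" and per: "\<And>y. g (y + axis j 1) = g y"
    and tau: "0 \<le> tau" "tau \<le> 1"
  shows "integral (cbox 0 One) (\<lambda>y. g (y + axis j tau)) = integral (cbox 0 One) g"
proof -
  define v :: "real^3" where "v = axis j tau"
  have int: "g integrable_on cbox a b" for a b
    by (rule integrable_continuous) (rule continuous_on_subset[OF cont], simp)
  have kB: "axis j (1::real) \<in> Basis" by simp
  have ij: "x \<bullet> axis j 1 = x $ j" for x :: "real^3" by (simp add: inner_axis)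
  have ax: "axis j t $ i = (if i = j then t else 0)" for t :: real and i by (simp add: axis_def)
  have s1: "integral (cbox 0 One) (\<lambda>y. g (y + v)) = integral (cbox v (One + v)) g"
  proof -
    have "((g \<circ> (+) v) has_integral integral (cbox (0 + v) (One + v)) g) (cbox 0 One)"
      using has_integral_shift_cbox_iff[of g v "integral (cbox (0 + v) (One + v)) g" 0 One] int
      by (simp add: integrable_integral)
    then show ?thesis by (simp add: o_def add.commute integral_unique)
  qed
  have s2: "integral (cbox v (One + v)) g =
      integral (cbox v (One + v) \<inter> {x. x \<bullet> axis j 1 \<le> 1}) g + integral (cbox v (One + v) \<inter> {x. x \<bullet> axis j 1 \<ge> 1}) g"
    by (rule integral_split[OF int kB])
  have P1: "cbox v (One + v) \<inter> {x. x \<bullet> axis j 1 \<le> 1} = cbox v One"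
    unfolding v_def by (rule cube_sets12(1)[OF tau])
  have P2: "cbox v (One + v) \<inter> {x. x \<bullet> axis j 1 \<ge> 1} = cbox (0 + axis j 1) ((One + v - axis j 1) + axis j 1)"
    unfolding v_def by (rule cube_sets12(2)[OF tau])
  have s3: "integral (cbox (0 + axis j 1) ((One + v - axis j 1) + axis j 1)) g = integral (cbox 0 (One + v - axis j 1)) g"
  proof -
    have "((g \<circ> (+) (axis j 1)) has_integral integral (cbox (0 + axis j 1) ((One + v - axis j 1) + axis j 1)) g) (cbox 0 (One + v - axis j 1))"
      using has_integral_shift_cbox_iff[of g "axis j 1" "integral (cbox (0 + axis j 1) ((One + v - axis j 1) + axis j 1)) g" 0 "One + v - axis j 1"]
        integrable_integral[OF int] by blast
    moreover have "g \<circ> (+) (axis j 1) = g" using per by (auto simp: o_def add.commute)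
    ultimately show ?thesis by (simp add: integral_unique)
  qed
  have s4: "integral (cbox 0 One) g =
      integral (cbox 0 One \<inter> {x. x \<bullet> axis j 1 \<le> tau}) g + integral (cbox 0 One \<inter> {x. x \<bullet> axis j 1 \<ge> tau}) g"
    by (rule integral_split[OF int kB])
  have Q1: "cbox 0 One \<inter> {x. x \<bullet> axis j 1 \<le> tau} = cbox 0 (One + v - axis j 1)"
    unfolding v_def by (rule cube_sets34(1)[OF tau])
  have Q2: "cbox 0 One \<inter> {x. x \<bullet> axis j 1 \<ge> tau} = cbox v One"
    unfolding v_def by (rule cube_sets34(2)[OF tau])
  have "integral (cbox 0 One) (\<lambda>y. g (y + v)) = integral (cbox v One) g + integral (cbox 0 (One + v - axis j 1)) g"
    using s1 s2 s3 unfolding P1 P2 by simp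
  also have "\<dots> = integral (cbox 0 One) g"
    using s4 unfolding Q1 Q2 by (simp only: add.commute)
  finally show ?thesis unfolding v_def .
qed




lemma cis_eq_Ints: "cis (2 * pi * a) = cis (2 * pi * b) \<Longrightarrow> a - b \<in> \<int>"
proof -
  assume "cis (2 * pi * a) = cis (2 * pi * b)"
  then have "exp (\<i> * complex_of_real (2 * pi * a)) = exp (\<i> * complex_of_real (2 * pi * b))"
    by (simp add: cis_conv_exp)
  then obtain n :: int where n: "\<i> * complex_of_real (2 * pi * a) = \<i> * complex_of_real (2 * pi * b) + (of_int (2 * n) * pi) * \<i>"
    unfolding exp_eq by blast
  then have "2 * pi * a = 2 * pi * b + 2 * n * pi"
    by (simp add: complex_eq_iff)
  then have "pi * (2 * a) = pi * (2 * (b + n))" by (simp add: algebra_simps)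
  then have "a = b + n" by simp
  then show ?thesis by simp
qed

lemma cs_rep: "complex_of_real (al * cos t + be * sin t) = ((al - \<i> * be) / 2) * cis t + ((al + \<i> * be) / 2) * cis (- t)"
  by (simp add: complex_eq_iff cis.sel algebra_simps) (simp add: field_simps)

definition qmap :: "real \<times> real \<Rightarrow> real^3 \<Rightarrow> (real \<times> real) \<times> (complex \<times> complex \<times> complex)" where
  "qmap s y = (s, (cis (2 * pi * (y $ 1)), cis (2 * pi * (y $ 2)), cis (2 * pi * (y $ 3))))"

definition coordl :: "3 \<Rightarrow> real \<Rightarrow> real \<Rightarrow> tlist" where
  "coordl j al be = [(\<lambda>s. (al - \<i> * be) / 2, axis j 1), (\<lambda>s. (al + \<i> * be) / 2, - axis j 1)]"

lemma coordl: "tsum (coordl j al be) s y = complex_of_real (al * cos (2 * pi * (y $ j)) + be * sin (2 * pi * (y $ j)))"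
  "tvalid D (coordl j al be)"
proof -
  show "tsum (coordl j al be) s y = complex_of_real (al * cos (2 * pi * (y $ j)) + be * sin (2 * pi * (y $ j)))"
    unfolding cs_rep by (simp add: coordl_def inner_axis')
  have h: "\<forall>i. axis j 1 $ i \<in> \<int>" by (simp add: axis_def)
  then show "tvalid D (coordl j al be)" by (simp add: coordl_def h)
qed

lemma poly_rep:
  assumes "real_polynomial_function p"
  shows "\<exists>xs. tvalid D xs \<and> (\<forall>s y. complex_of_real (p (qmap s y)) = tsum xs s y)"
  using assms
proof (induction p rule: real_polynomial_function.induct)
  case (linear p)
  have lin: "linear p" using linear by (rule bounded_linear.linear)
  define al where "al j = p (0, (if j = (1::3) then 1 else 0, if j = 2 then 1 else 0, if j = 3 then 1 else 0))" for j
  define be where "be j = p (0, (if j = (1::3) then \<i> else 0, if j = 2 then \<i> else 0, if j = 3 then \<i> else 0))" for j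
  define xs where "xs = [(\<lambda>s. complex_of_real (p (s, 0)), 0::real^3)] @ coordl 1 (al 1) (be 1) @ coordl 2 (al 2) (be 2) @ coordl 3 (al 3) (be 3)"
  have cont: "continuous_on D (\<lambda>s. complex_of_real (p (s, 0)))"
    by (intro continuous_intros bounded_linear.continuous_on[OF linear])
  have "tvalid D xs" using cont by (simp add: xs_def coordl)
  moreover have "complex_of_real (p (qmap s y)) = tsum xs s y" for s y
  proof -
    define z1 where "z1 = cis (2 * pi * (y $ 1))"
    define z2 where "z2 = cis (2 * pi * (y $ 2))"
    define z3 where "z3 = cis (2 * pi * (y $ 3))"
    have e: "qmap s y = (s, 0) + Re z1 *\<^sub>R (0, (1, 0, 0)) + Im z1 *\<^sub>R (0, (\<i>, 0, 0))
        + Re z2 *\<^sub>R (0, (0, 1, 0)) + Im z2 *\<^sub>R (0, (0, \<i>, 0))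
        + Re z3 *\<^sub>R (0, (0, 0, 1)) + Im z3 *\<^sub>R (0, (0, 0, \<i>))"
      by (simp add: qmap_def z1_def z2_def z3_def complex_eq_iff)
    have "p (qmap s y) = p (s, 0) + Re z1 * p (0, (1, 0, 0)) + Im z1 * p (0, (\<i>, 0, 0))
        + Re z2 * p (0, (0, 1, 0)) + Im z2 * p (0, (0, \<i>, 0))
        + Re z3 * p (0, (0, 0, 1)) + Im z3 * p (0, (0, 0, \<i>))"
      unfolding e by (simp only: linear_add[OF lin] linear_scale[OF lin] real_scaleR_def)
    then have "p (qmap s y) = p (s, 0) + (Re z1 * al 1 + Im z1 * be 1) + (Re z2 * al 2 + Im z2 * be 2) + (Re z3 * al 3 + Im z3 * be 3)"
      by (simp add: al_def be_def)
    then show ?thesis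
      by (simp add: xs_def coordl z1_def z2_def z3_def mult.commute)
  qed
  ultimately show ?case by blast
next
  case (const c)
  show ?case
    by (rule exI[of _ "[(\<lambda>s. complex_of_real c, 0)]"]) (simp add: continuous_on_const)
next
  case (add f g)
  then obtain xs ys where "tvalid D xs" "\<forall>s y. complex_of_real (f (qmap s y)) = tsum xs s y"
    "tvalid D ys" "\<forall>s y. complex_of_real (g (qmap s y)) = tsum ys s y" by blast
  then show ?case by (intro exI[of _ "xs @ ys"]) simp
next
  case (mult f g)
  then obtain xs ys where "tvalid D xs" "\<forall>s y. complex_of_real (f (qmap s y)) = tsum xs s y"
    "tvalid D ys" "\<forall>s y. complex_of_real (g (qmap s y)) = tsum ys s y" by blast
  then show ?case by (intro exI[of _ "tprod xs ys"]) (simp add: tvalid_tprod tsum_tprod)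
qed




lemma qmap_eq_imp:
  assumes "qmap s y' = qmap s y" shows "\<forall>i. (y' - y) $ i \<in> \<int>"
proof -
  have "cis (2 * pi * (y' $ i)) = cis (2 * pi * (y $ i))" if "i = 1 \<or> i = 2 \<or> i = 3" for i :: 3
    using assms that by (auto simp: qmap_def)
  then have "y' $ i - y $ i \<in> \<int>" for i :: 3
    using exhaust_3[of i] cis_eq_Ints by blast
  then show ?thesis by simp
qed

lemma cis_frac: "cis (2 * pi * frac x) = cis (2 * pi * x)"
proof -
  have "cis (2 * pi * frac x) = cis (2 * pi * x) * cis (2 * pi * (- of_int \<lfloor>x\<rfloor>))"
    by (simp add: cis_mult frac_def algebra_simps)
  also have "cis (2 * pi * (- of_int \<lfloor>x\<rfloor>)) = 1"
    by (rule cis_multiple_2pi) simp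
  finally show ?thesis by simp
qed

lemma qmap_red: "\<exists>y0 \<in> cbox 0 One. qmap s y0 = qmap s y"
proof -
  define y0 :: "real^3" where "y0 = (\<chi> i. frac (y $ i))"
  have "y0 \<in> cbox 0 One" unfolding mem_box_cart y0_def using frac_lt_1 frac_ge_0 by (auto intro: less_imp_le)
  moreover have "qmap s y0 = qmap s y" by (simp add: qmap_def y0_def cis_frac)
  ultimately show ?thesis by blast
qed

lemma continuous_qmap: "continuous_on S (\<lambda>x. qmap (fst x) (snd x))"
  unfolding qmap_def by (intro continuous_intros)

lemma approx:
  fixes psi :: "real \<times> real \<Rightarrow> real^3 \<Rightarrow> real" and D :: "(real \<times> real) set"
  assumes compD: "compact D" and cont: "continuous_on (D \<times> UNIV) (\<lambda>(s, y). psi s y)"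
    and per: "\<And>s y m. s \<in> D \<Longrightarrow> (\<forall>i. m $ i \<in> \<int>) \<Longrightarrow> psi s (y + m) = psi s y"
    and eta: "eta > 0"
  shows "\<exists>xs P. tvalid D xs \<and> (\<forall>s y. tsum xs s y = complex_of_real (P s y)) \<and> (\<forall>s\<in>D. \<forall>y. \<bar>psi s y - P s y\<bar> < eta)"
proof -
  define cube :: "(real^3) set" where "cube = cbox 0 One"
  define Q where "Q x = qmap (fst x) (snd x)" for x :: "(real \<times> real) \<times> (real^3)"
  define Psi where "Psi x = psi (fst x) (snd x)" for x :: "(real \<times> real) \<times> (real^3)"
  define K where "K = Q ` (D \<times> cube)"
  define F where "F z = psi (fst z) (SOME y. qmap (fst z) y = z)" for z :: "(real \<times> real) \<times> (complex \<times> complex \<times> complex)"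
  have contQ: "continuous_on S Q" for S unfolding Q_def by (rule continuous_qmap)
  have compDC: "compact (D \<times> cube)" unfolding cube_def using compD by (intro compact_Times) auto
  have compK: "compact K" unfolding K_def by (rule compact_continuous_image[OF contQ compDC])
  have fstq: "fst (qmap s y) = s" for s y by (simp add: qmap_def)
  have Fq: "F (qmap s y) = psi s y" if "s \<in> D" for s y
  proof -
    define y' where "y' = (SOME y'. qmap s y' = qmap s y)"
    have "qmap s y' = qmap s y" unfolding y'_def by (rule someI[of _ y]) simp
    then have "\<forall>i. (y' - y) $ i \<in> \<int>" by (rule qmap_eq_imp)
    then have "psi s (y + (y' - y)) = psi s y" by (rule per[OF that])
    then show ?thesis unfolding F_def fstq y'_def[symmetric] by simp
  qed
  have contPsi: "continuous_on (D \<times> cube) Psi"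
  proof -
    have "continuous_on (D \<times> cube) (\<lambda>(s, y). psi s y)"
      by (rule continuous_on_subset[OF cont]) auto
    then show ?thesis unfolding Psi_def by (simp add: split_beta')
  qed
  have contF: "continuous_on K F"
  proof -
    have clK: "closed K" using compK by (rule compact_imp_closed)
    have "closed (K \<inter> F -` B)" if B: "closed B" for B
    proof -
      have eq: "K \<inter> F -` B = Q ` ((D \<times> cube) \<inter> Psi -` B)"
      proof
        show "K \<inter> F -` B \<subseteq> Q ` ((D \<times> cube) \<inter> Psi -` B)"
        proof
          fix z assume "z \<in> K \<inter> F -` B"
          then obtain x where x: "x \<in> D \<times> cube" "z = Q x" "F z \<in> B" unfolding K_def by auto
          then have "Psi x \<in> B" using Fq[of "fst x" "snd x"] by (auto simp: Q_def Psi_def)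
          then show "z \<in> Q ` ((D \<times> cube) \<inter> Psi -` B)" using x by auto
        qed
        show "Q ` ((D \<times> cube) \<inter> Psi -` B) \<subseteq> K \<inter> F -` B"
        proof
          fix z assume "z \<in> Q ` ((D \<times> cube) \<inter> Psi -` B)"
          then obtain x where x: "x \<in> D \<times> cube" "z = Q x" "Psi x \<in> B" by auto
          then have "F z \<in> B" using Fq[of "fst x" "snd x"] by (auto simp: Q_def Psi_def)
          then show "z \<in> K \<inter> F -` B" using x unfolding K_def by auto
        qed
      qed
      have cl: "closed ((D \<times> cube) \<inter> Psi -` B)"
        using continuous_on_closed_vimage[OF compact_imp_closed[OF compDC], THEN iffD1, OF contPsi, rule_format, OF B]
        by (simp only: Int_commute)
      have "compact ((D \<times> cube) \<inter> ((D \<times> cube) \<inter> Psi -` B))"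
        by (rule compact_Int_closed[OF compDC cl])
      then have "compact ((D \<times> cube) \<inter> Psi -` B)" by (simp only: Int_assoc[symmetric] Int_absorb)
      then have "compact (Q ` ((D \<times> cube) \<inter> Psi -` B))"
        by (rule compact_continuous_image[OF contQ])
      then show ?thesis unfolding eq by (rule compact_imp_closed)
    qed
    then show ?thesis by (intro continuous_on_closed_vimage[OF clK, THEN iffD2] allI impI) (simp only: Int_commute)
  qed
  obtain g where g: "polynomial_function g" "\<And>x. x \<in> K \<Longrightarrow> norm (F x - g x) < eta"
    using Stone_Weierstrass_polynomial_function[OF compK contF eta] by blast
  have "real_polynomial_function g" using g(1) by (simp add: real_polynomial_function_eq)
  then obtain xs where xs: "tvalid D xs" "\<forall>s y. complex_of_real (g (qmap s y)) = tsum xs s y"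
    using poly_rep by blast
  have "\<bar>psi s y - g (qmap s y)\<bar> < eta" if s: "s \<in> D" for s y
  proof -
    obtain y0 where y0: "y0 \<in> cube" "qmap s y0 = qmap s y" using qmap_red cube_def by blast
    have "qmap s y \<in> K" unfolding K_def using y0 s by (auto simp: Q_def intro!: image_eqI[of _ _ "(s, y0)"])
    then have "norm (F (qmap s y) - g (qmap s y)) < eta" by (rule g(2))
    then show ?thesis using Fq[OF s, of y] by simp
  qed
  then show ?thesis using xs by (intro exI[of _ xs] exI[of _ "\<lambda>s y. g (qmap s y)"]) auto
qed




lemma cube_mode:
  fixes m :: "real^3"
  assumes mi: "\<forall>i. m $ i \<in> \<int>" and m0: "m \<noteq> 0"
  shows "integral (cbox 0 One) (\<lambda>y. cis (2 * pi * (m \<bullet> y))) = 0"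
proof -
  obtain j where j: "m $ j \<noteq> 0" using m0 by (metis vec_eq_iff zero_index)
  define k where "k = m $ j"
  have kI: "k \<in> \<int>" using mi k_def by simp
  have k1: "\<bar>k\<bar> \<ge> 1" using kI j k_def by (metis Ints_nonzero_abs_ge1)
  define tau where "tau = 1 / (2 * \<bar>k\<bar>)"
  have tau: "0 \<le> tau" "tau \<le> 1"
    unfolding tau_def using k1 by (simp, subst pos_divide_le_eq) auto
  define g where "g y = cis (2 * pi * (m \<bullet> y))" for y
  have cont: "continuous_on UNIV g" unfolding g_def by (intro continuous_intros)
  have per: "g (y + axis j 1) = g y" for y
  proof -
    have "g (y + axis j 1) = g y * cis (2 * pi * k)"
      by (simp add: g_def inner_add_right inner_axis k_def distrib_left cis_mult)
    also have "cis (2 * pi * k) = 1" using kI by simp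
    finally show ?thesis by simp
  qed
  have half: "cis (2 * pi * (k * tau)) = -1"
  proof (cases "k > 0")
    case True
    then have e: "2 * pi * (k * tau) = pi" using tau_def by (simp add: field_simps)
    show ?thesis unfolding e by simp
  next
    case False
    then have "k < 0" using j k_def by simp
    then have "2 * pi * (k * tau) = - pi" using tau_def by (simp add: field_simps)
    then show ?thesis by (simp add: complex_eq_iff)
  qed
  have sh: "g (y + axis j tau) = - g y" for y
  proof -
    have "g (y + axis j tau) = g y * cis (2 * pi * (k * tau))"
      by (simp add: g_def inner_add_right inner_axis k_def distrib_left cis_mult mult.commute)
    then show ?thesis using half by simp
  qed
  have "integral (cbox 0 One) (\<lambda>y. g (y + axis j tau)) = integral (cbox 0 One) g"
    by (rule cube_shift[OF cont per tau])
  then have "- integral (cbox 0 One) g = integral (cbox 0 One) g"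
    by (simp add: sh integral_neg)
  then have "integral (cbox 0 One) g = 0" by simp
  then show ?thesis unfolding g_def .
qed

lemma continuous_tsum: "continuous_on S (\<lambda>y. tsum xs s y)"
  by (induction xs) (auto intro!: continuous_intros)

lemma tsum_cube:
  assumes "\<forall>p\<in>set xs. \<forall>i. snd p $ i \<in> \<int>"
  shows "integral (cbox 0 One) (\<lambda>y. tsum xs s y) = tmean xs s"
  using assms
proof (induction xs)
  case Nil then show ?case by (simp add: tmean_def)
next
  case (Cons p xs)
  have i1: "(\<lambda>y. fst p s * cis (2 * pi * (snd p \<bullet> y))) integrable_on cbox 0 One"
    by (intro integrable_continuous continuous_intros)
  have i2: "(\<lambda>y. tsum xs s y) integrable_on cbox 0 One"
    by (intro integrable_continuous continuous_tsum)
  have "integral (cbox 0 One) (\<lambda>y. tsum (p # xs) s y) =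
      integral (cbox 0 One) (\<lambda>y. fst p s * cis (2 * pi * (snd p \<bullet> y))) + integral (cbox 0 One) (\<lambda>y. tsum xs s y)"
    using integral_add[OF i1 i2] by simp
  also have "integral (cbox 0 One) (\<lambda>y. fst p s * cis (2 * pi * (snd p \<bullet> y))) = (if snd p = 0 then fst p s else 0)"
  proof (cases "snd p = 0")
    case True then show ?thesis by simp
  next
    case False
    then show ?thesis using cube_mode[of "snd p"] Cons.prems by simp
  qed
  also have "integral (cbox 0 One) (\<lambda>y. tsum xs s y) = tmean xs s" using Cons by simp
  finally show ?case by (simp add: tmean_def)
qed




lemma mode_limit:
  fixes a1 b1 a2 b2 :: real and Y Y' :: "real \<Rightarrow> real^3" and c :: "real \<times> real \<Rightarrow> complex" and m :: "real^3"
  assumes Y_deriv: "\<And>t. t \<in> {a2..b2} \<Longrightarrow> (Y has_vector_derivative Y' t) (at t within {a2..b2})"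
    and Y'_cont: "continuous_on {a2..b2} Y'"
    and nr: "\<exists>\<delta>0>0. \<exists>N :: real \<Rightarrow> nat. \<exists>c d :: real \<Rightarrow> nat \<Rightarrow> real.
         (\<forall>\<delta>\<in>{0<..<\<delta>0}.
            (\<forall>i<N \<delta>. c \<delta> i \<le> d \<delta> i) \<and>
            {s2 \<in> {a2..b2}. \<bar>m \<bullet> Y' s2\<bar> \<le> \<delta>} \<subseteq> (\<Union>i<N \<delta>. {c \<delta> i..d \<delta> i})) \<and>
         ((\<lambda>\<delta>. \<Sum>i<N \<delta>. d \<delta> i - c \<delta> i) \<longlongrightarrow> 0) (at_right 0)"
    and contc: "continuous_on (cbox (a1, a2) (b1, b2)) c"
  shows "((\<lambda>eps. integral (cbox (a1, a2) (b1, b2)) (\<lambda>s. c s * cis (2 * pi * (m \<bullet> ((1 / eps) *\<^sub>R Y (snd s))))))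
           \<longlongrightarrow> 0) (at_right 0)"
proof (cases "a1 < b1 \<and> a2 < b2")
  case False
  then have "measure lborel (cbox (a1, a2) (b1, b2)) = 0"
    by (auto simp: content_Pair content_real)
  then show ?thesis by simp
next
  case True
  then have ab1: "a1 < b1" and ab2: "a2 < b2" by auto
  define phi where "phi t = 2 * pi * (m \<bullet> Y t)" for t
  define phi' where "phi' t = 2 * pi * (m \<bullet> Y' t)" for t
  have contY: "continuous_on {a2..b2} Y"
    unfolding continuous_on_eq_continuous_within
    using Y_deriv has_vector_derivative_continuous by blast
  have der: "(phi has_real_derivative phi' t) (at t within {a2..b2})" if t: "t \<in> {a2..b2}" for t
  proof -
    have "((\<lambda>t. m \<bullet> Y t) has_derivative (\<lambda>h. m \<bullet> (h *\<^sub>R Y' t))) (at t within {a2..b2})"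
      using bounded_linear.has_derivative[OF bounded_linear_inner_right Y_deriv[OF t, unfolded has_vector_derivative_def]] .
    then have "((\<lambda>t. m \<bullet> Y t) has_real_derivative (m \<bullet> Y' t)) (at t within {a2..b2})"
      unfolding has_field_derivative_def
      by (rule has_derivative_eq_rhs) (simp add: fun_eq_iff mult.commute)
    from DERIV_cmult[OF this, of "2 * pi"] show ?thesis unfolding phi_def phi'_def .
  qed
  have contp: "continuous_on {a2..b2} phi'" unfolding phi'_def by (intro continuous_intros Y'_cont)
  from nr obtain d0 and N :: "real \<Rightarrow> nat" and cc dd :: "real \<Rightarrow> nat \<Rightarrow> real" where
    d0: "d0 > 0" and cv: "\<forall>\<delta>\<in>{0<..<d0}. (\<forall>i<N \<delta>. cc \<delta> i \<le> dd \<delta> i) \<and>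
            {s2 \<in> {a2..b2}. \<bar>m \<bullet> Y' s2\<bar> \<le> \<delta>} \<subseteq> (\<Union>i<N \<delta>. {cc \<delta> i..dd \<delta> i})"
    and lim: "((\<lambda>\<delta>. \<Sum>i<N \<delta>. dd \<delta> i - cc \<delta> i) \<longlongrightarrow> 0) (at_right 0)"
    by blast
  have seteq: "{t \<in> {a2..b2}. \<bar>phi' t\<bar> \<le> (2 * pi) * dl} = {s2 \<in> {a2..b2}. \<bar>m \<bullet> Y' s2\<bar> \<le> dl}" for dl
    by (auto simp: phi'_def abs_mult)
  define G where "G y = integral (cbox a1 b1) (\<lambda>x. c (x, y))" for y
  have contG: "continuous_on {a2..b2} G"
  proof -
    have "continuous_on ({a2..b2} \<times> cbox a1 b1) (\<lambda>z. c (snd z, fst z))"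
      by (rule continuous_on_compose2[OF contc]) (auto intro!: continuous_intros simp: cbox_Pair_eq)
    then have "continuous_on ({a2..b2} \<times> cbox a1 b1) (\<lambda>(y, x). c (x, y))"
      by (simp add: split_beta')
    then show ?thesis unfolding G_def by (rule integral_continuous_on_param)
  qed
  have osc: "((\<lambda>eps. integral {a2..b2} (\<lambda>t. G t * cis (phi t / eps))) \<longlongrightarrow> 0) (at_right 0)"
  proof (rule osc_limit[OF ab2 contG der contp _ d0 _ lim])
    show "0 < 2 * pi" by simp
    fix dl :: real assume "dl \<in> {0<..<d0}"
    then show "(\<forall>i<N dl. cc dl i \<le> dd dl i) \<and> {t \<in> {a2..b2}. \<bar>phi' t\<bar> \<le> 2 * pi * dl} \<subseteq> (\<Union>i<N dl. {cc dl i..dd dl i})"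
      using cv seteq by auto
  qed auto
  have eq: "integral (cbox (a1, a2) (b1, b2)) (\<lambda>s. c s * cis (2 * pi * (m \<bullet> ((1 / eps) *\<^sub>R Y (snd s)))))
      = integral {a2..b2} (\<lambda>t. G t * cis (phi t / eps))" for eps
  proof -
    define f where "f x y = c (x, y) * cis (phi y / eps)" for x y
    have cY: "continuous_on (cbox (a1, a2) (b1, b2)) (\<lambda>s. Y (snd s))"
      by (rule continuous_on_compose2[OF contY]) (auto intro!: continuous_intros simp: cbox_Pair_eq)
    have cf: "continuous_on (cbox (a1, a2) (b1, b2)) (\<lambda>(x, y). f x y)"
    proof -
      have "continuous_on (cbox (a1, a2) (b1, b2)) (\<lambda>s. c s * cis ((1 / eps) * (2 * pi * (m \<bullet> Y (snd s)))))"
        by (intro continuous_intros contc cY)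
      moreover have "(\<lambda>s. c s * cis ((1 / eps) * (2 * pi * (m \<bullet> Y (snd s))))) = (\<lambda>(x, y). f x y)"
        by (auto simp: f_def phi_def fun_eq_iff)
      ultimately show ?thesis by (simp only:)
    qed
    have e1: "(\<lambda>s. c s * cis (2 * pi * (m \<bullet> ((1 / eps) *\<^sub>R Y (snd s))))) = (\<lambda>(x, y). f x y)"
      by (auto simp: f_def phi_def fun_eq_iff)
    have "integral (cbox (a1, a2) (b1, b2)) (\<lambda>(x, y). f x y) = integral (cbox a1 b1) (\<lambda>x. integral (cbox a2 b2) (f x))"
      using integral_prod_continuous[OF cf] by simp
    also have "\<dots> = integral (cbox a2 b2) (\<lambda>y. integral (cbox a1 b1) (\<lambda>x. f x y))"
      by (rule integral_swap_continuous[OF cf])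
    also have "\<dots> = integral {a2..b2} (\<lambda>t. G t * cis (phi t / eps))"
      by (simp add: f_def G_def)
    finally show ?thesis unfolding e1 .
  qed
  show ?thesis unfolding eq by (rule osc)
qed




lemma continuous_tmean: "tvalid D xs \<Longrightarrow> continuous_on D (tmean xs)"
proof (induction xs)
  case Nil then show ?case by (simp add: tmean_def)
next
  case (Cons p xs)
  have "tmean (p # xs) = (\<lambda>s. (if snd p = 0 then fst p s else 0) + tmean xs s)"
    by (simp add: tmean_def fun_eq_iff)
  moreover have "continuous_on D (\<lambda>s. if snd p = 0 then fst p s else 0)"
    using Cons.prems by (cases "snd p = 0") auto
  ultimately show ?case using Cons by (auto intro!: continuous_intros)
qed

lemma list_limit:
  fixes a1 b1 a2 b2 :: real and Y Y' :: "real \<Rightarrow> real^3"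
  assumes Y_deriv: "\<And>t. t \<in> {a2..b2} \<Longrightarrow> (Y has_vector_derivative Y' t) (at t within {a2..b2})"
    and Y'_cont: "continuous_on {a2..b2} Y'"
    and nonres: "\<And>m::real^3. (\<forall>i. m $ i \<in> \<int>) \<Longrightarrow> m \<noteq> 0 \<Longrightarrow>
      (\<exists>\<delta>0>0. \<exists>N :: real \<Rightarrow> nat. \<exists>c d :: real \<Rightarrow> nat \<Rightarrow> real.
         (\<forall>\<delta>\<in>{0<..<\<delta>0}.
            (\<forall>i<N \<delta>. c \<delta> i \<le> d \<delta> i) \<and>
            {s2 \<in> {a2..b2}. \<bar>m \<bullet> Y' s2\<bar> \<le> \<delta>} \<subseteq> (\<Union>i<N \<delta>. {c \<delta> i..d \<delta> i})) \<and>
         ((\<lambda>\<delta>. \<Sum>i<N \<delta>. d \<delta> i - c \<delta> i) \<longlongrightarrow> 0) (at_right 0))"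
    and valid: "tvalid (cbox (a1, a2) (b1, b2)) xs"
  shows "((\<lambda>eps. integral (cbox (a1, a2) (b1, b2)) (\<lambda>s. tsum xs s ((1 / eps) *\<^sub>R Y (snd s))))
           \<longlongrightarrow> integral (cbox (a1, a2) (b1, b2)) (tmean xs)) (at_right 0)"
  using valid
proof (induction xs)
  case Nil then show ?case by (simp add: tmean_def)
next
  case (Cons p xs)
  define D where "D = cbox (a1, a2) (b1, b2)"
  have contY: "continuous_on {a2..b2} Y"
    unfolding continuous_on_eq_continuous_within
    using Y_deriv has_vector_derivative_continuous by blast
  have cY: "continuous_on D (\<lambda>s. Y (snd s))"
    unfolding D_def by (rule continuous_on_compose2[OF contY]) (auto intro!: continuous_intros simp: cbox_Pair_eq)
  have vp: "continuous_on D (fst p)" "\<forall>i. snd p $ i \<in> \<int>" and vx: "tvalid D xs"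
    using Cons.prems D_def by auto
  have cts0: "continuous_on D (\<lambda>s. tsum ys s (r *\<^sub>R Y (snd s)))" if "tvalid D ys" for ys r
    using that by (induction ys) (auto intro!: continuous_intros cY)
  have cts: "continuous_on D (\<lambda>s. tsum ys s ((1 / eps) *\<^sub>R Y (snd s)))" if "tvalid D ys" for ys eps
    by (rule cts0[OF that])
  have i1: "(\<lambda>s. fst p s * cis (2 * pi * (snd p \<bullet> ((1 / eps) *\<^sub>R Y (snd s))))) integrable_on D" for eps
    unfolding D_def by (rule integrable_continuous) (intro continuous_intros vp(1)[unfolded D_def] cY[unfolded D_def])
  have i2: "(\<lambda>s. tsum xs s ((1 / eps) *\<^sub>R Y (snd s))) integrable_on D" for eps
    unfolding D_def by (rule integrable_continuous) (rule cts[OF vx, unfolded D_def])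
  have e1: "integral D (\<lambda>s. tsum (p # xs) s ((1 / eps) *\<^sub>R Y (snd s))) =
      integral D (\<lambda>s. fst p s * cis (2 * pi * (snd p \<bullet> ((1 / eps) *\<^sub>R Y (snd s))))) + integral D (\<lambda>s. tsum xs s ((1 / eps) *\<^sub>R Y (snd s)))" for eps
    using integral_add[OF i1 i2] by simp
  have j1: "(\<lambda>s. if snd p = 0 then fst p s else 0) integrable_on D"
    unfolding D_def by (rule integrable_continuous) (cases "snd p = 0", use vp(1)[unfolded D_def] in auto)
  have j2: "tmean xs integrable_on D"
    unfolding D_def by (rule integrable_continuous) (rule continuous_tmean[OF vx, unfolded D_def])
  have e2: "integral D (tmean (p # xs)) = integral D (\<lambda>s. if snd p = 0 then fst p s else 0) + integral D (tmean xs)"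
  proof -
    have "tmean (p # xs) = (\<lambda>s. (if snd p = 0 then fst p s else 0) + tmean xs s)"
      by (simp add: tmean_def fun_eq_iff)
    then show ?thesis using integral_add[OF j1 j2] by simp
  qed
  have l1: "((\<lambda>eps. integral D (\<lambda>s. fst p s * cis (2 * pi * (snd p \<bullet> ((1 / eps) *\<^sub>R Y (snd s))))))
     \<longlongrightarrow> integral D (\<lambda>s. if snd p = 0 then fst p s else 0)) (at_right 0)"
  proof (cases "snd p = 0")
    case True then show ?thesis by simp
  next
    case False
    have "((\<lambda>eps. integral D (\<lambda>s. fst p s * cis (2 * pi * (snd p \<bullet> ((1 / eps) *\<^sub>R Y (snd s)))))) \<longlongrightarrow> 0) (at_right 0)"
      unfolding D_def by (rule mode_limit[OF Y_deriv Y'_cont nonres[OF vp(2) False] vp(1)[unfolded D_def]])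
    then show ?thesis using False by simp
  qed
  have l2: "((\<lambda>eps. integral D (\<lambda>s. tsum xs s ((1 / eps) *\<^sub>R Y (snd s)))) \<longlongrightarrow> integral D (tmean xs)) (at_right 0)"
    using Cons.IH vx D_def by simp
  show ?case unfolding D_def[symmetric] e1 e2 by (rule tendsto_add[OF l1 l2])
qed

theorem lemma6:
  fixes a1 b1 a2 b2 :: real
    and \<psi> :: "real \<times> real \<Rightarrow> real^3 \<Rightarrow> real"
    and Y Y' :: "real \<Rightarrow> real^3"
  assumes cont: "continuous_on ((cbox (a1, a2) (b1, b2)) \<times> UNIV) (\<lambda>(s, y). \<psi> s y)"
    and periodic: "\<And>s y m. s \<in> cbox (a1, a2) (b1, b2) \<Longrightarrow> (\<forall>i. m $ i \<in> \<int>) \<Longrightarrow>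
                      \<psi> s (y + m) = \<psi> s y"
    and Y_deriv: "\<And>t. t \<in> {a2..b2} \<Longrightarrow> (Y has_vector_derivative Y' t) (at t within {a2..b2})"
    and Y'_cont: "continuous_on {a2..b2} Y'"
    and nonres: "\<And>m::real^3. (\<forall>i. m $ i \<in> \<int>) \<Longrightarrow> m \<noteq> 0 \<Longrightarrow>
      (\<exists>\<delta>0>0. \<exists>N :: real \<Rightarrow> nat. \<exists>c d :: real \<Rightarrow> nat \<Rightarrow> real.
         (\<forall>\<delta>\<in>{0<..<\<delta>0}.
            (\<forall>i<N \<delta>. c \<delta> i \<le> d \<delta> i) \<and>
            {s2 \<in> {a2..b2}. \<bar>m \<bullet> Y' s2\<bar> \<le> \<delta>} \<subseteq> (\<Union>i<N \<delta>. {c \<delta> i..d \<delta> i})) \<and>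
         ((\<lambda>\<delta>. \<Sum>i<N \<delta>. d \<delta> i - c \<delta> i) \<longlongrightarrow> 0) (at_right 0))"
  shows "((\<lambda>\<epsilon>. integral (cbox (a1, a2) (b1, b2)) (\<lambda>s. \<psi> s ((1 / \<epsilon>) *\<^sub>R Y (snd s))))
          \<longlongrightarrow> integral (cbox (a1, a2) (b1, b2)) (\<lambda>s. integral (cbox 0 One) (\<lambda>y. \<psi> s y)))
         (at_right 0)"
proof -
  define D where "D = cbox (a1, a2) (b1, b2)"
  define cube :: "(real^3) set" where "cube = cbox 0 One"
  define C where "C = measure lborel D"
  have C0: "C \<ge> 0" unfolding C_def by simp
  have compD: "compact D" unfolding D_def by simp
  have contY: "continuous_on {a2..b2} Y"
    unfolding continuous_on_eq_continuous_within
    using Y_deriv has_vector_derivative_continuous by blast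
  have cY: "continuous_on D (\<lambda>s. Y (snd s))"
    unfolding D_def by (rule continuous_on_compose2[OF contY]) (auto intro!: continuous_intros simp: cbox_Pair_eq)
  have contA: "continuous_on D (\<lambda>s. \<psi> s ((1 / eps) *\<^sub>R Y (snd s)))" for eps
  proof -
    have "continuous_on D (\<lambda>s. (\<lambda>(s, y). \<psi> s y) (s, (1 / eps) *\<^sub>R Y (snd s)))"
      by (rule continuous_on_compose2[OF cont[folded D_def]]) (auto intro!: continuous_intros cY)
    then show ?thesis by simp
  qed
  have intA: "(\<lambda>s. \<psi> s ((1 / eps) *\<^sub>R Y (snd s))) integrable_on D" for eps
    unfolding D_def by (rule integrable_continuous) (rule contA[unfolded D_def])
  have contcube: "continuous_on (D \<times> cbox 0 One) (\<lambda>(s, y). \<psi> s y)"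
    by (rule continuous_on_subset[OF cont[folded D_def]]) auto
  have contT: "continuous_on D (\<lambda>s. integral cube (\<psi> s))"
    unfolding cube_def by (rule integral_continuous_on_param[OF contcube])
  have intT: "(\<lambda>s. integral cube (\<psi> s)) integrable_on D"
    unfolding D_def by (rule integrable_continuous) (rule contT[unfolded D_def])
  have intpsi: "\<psi> s integrable_on cube" if "s \<in> D" for s
  proof -
    have "continuous_on cube (\<lambda>y. (\<lambda>(s, y). \<psi> s y) (s, y))"
      by (rule continuous_on_compose2[OF cont[folded D_def]]) (use that in \<open>auto intro!: continuous_intros\<close>)
    then show ?thesis unfolding cube_def by (intro integrable_continuous) simp
  qed
  show ?thesis
    unfolding D_def[symmetric] cube_def[symmetric] tendsto_iff dist_real_def
  proof (intro allI impI)
    fix eta :: real assume eta: "eta > 0"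
    define e where "e = eta / (3 * (C + 1))"
    have e: "e > 0" using eta C0 e_def by simp
    have eC: "e * C < eta / 3"
    proof -
      have "e * C = eta / 3 * (C / (C + 1))" using e_def C0 by (simp add: field_simps)
      also have "\<dots> < eta / 3 * 1" using C0 eta by (intro mult_strict_left_mono) auto
      finally show ?thesis by simp
    qed
    obtain xs P where xs: "tvalid D xs" "\<And>s y. tsum xs s y = complex_of_real (P s y)"
      "\<And>s y. s \<in> D \<Longrightarrow> \<bar>\<psi> s y - P s y\<bar> < e"
      using approx[OF compD cont[folded D_def] periodic[folded D_def] e] by blast
    define B where "B eps = integral D (\<lambda>s. tsum xs s ((1 / eps) *\<^sub>R Y (snd s)))" for eps
    define Mn where "Mn = integral D (tmean xs)"
    have limB: "(B \<longlongrightarrow> Mn) (at_right 0)"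
      unfolding B_def Mn_def D_def by (rule list_limit[OF Y_deriv Y'_cont nonres xs(1)[unfolded D_def]])
    have evB: "eventually (\<lambda>eps. norm (B eps - Mn) < eta / 3) (at_right 0)"
    proof -
      have "eta / 3 > 0" using eta by simp
      then show ?thesis using limB unfolding tendsto_iff dist_norm by blast
    qed
    have cts0: "continuous_on D (\<lambda>s. tsum ys s (r *\<^sub>R Y (snd s)))" if "tvalid D ys" for ys r
      using that by (induction ys) (auto intro!: continuous_intros cY)
    have cts: "continuous_on D (\<lambda>s. tsum ys s ((1 / eps) *\<^sub>R Y (snd s)))" if "tvalid D ys" for ys eps
      by (rule cts0[OF that])
    have AB: "norm (complex_of_real (integral D (\<lambda>s. \<psi> s ((1 / eps) *\<^sub>R Y (snd s)))) - B eps) \<le> e * C" for eps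
    proof -
      have iB: "(\<lambda>s. tsum xs s ((1 / eps) *\<^sub>R Y (snd s))) integrable_on D"
        unfolding D_def by (rule integrable_continuous) (rule cts[OF xs(1), unfolded D_def])
      have iA': "(\<lambda>s. complex_of_real (\<psi> s ((1 / eps) *\<^sub>R Y (snd s)))) integrable_on D"
        unfolding D_def by (rule integrable_continuous) (intro continuous_intros contA[unfolded D_def])
      have "complex_of_real (integral D (\<lambda>s. \<psi> s ((1 / eps) *\<^sub>R Y (snd s)))) =
          integral D (complex_of_real \<circ> (\<lambda>s. \<psi> s ((1 / eps) *\<^sub>R Y (snd s))))"
        by (rule integral_linear[OF intA bounded_linear_of_real, symmetric])
      then have "complex_of_real (integral D (\<lambda>s. \<psi> s ((1 / eps) *\<^sub>R Y (snd s)))) - B eps =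
          integral D (\<lambda>s. complex_of_real (\<psi> s ((1 / eps) *\<^sub>R Y (snd s))) - tsum xs s ((1 / eps) *\<^sub>R Y (snd s)))"
        unfolding B_def using integral_diff[OF iA' iB] by (simp add: o_def)
      also have "norm \<dots> \<le> e * C"
      proof -
        have hi: "((\<lambda>s. complex_of_real (\<psi> s ((1 / eps) *\<^sub>R Y (snd s))) - tsum xs s ((1 / eps) *\<^sub>R Y (snd s)))
            has_integral integral D (\<lambda>s. complex_of_real (\<psi> s ((1 / eps) *\<^sub>R Y (snd s))) - tsum xs s ((1 / eps) *\<^sub>R Y (snd s)))) (cbox (a1, a2) (b1, b2))"
          using integrable_integral[OF integrable_diff[OF iA' iB]] unfolding D_def .
        have pw: "norm (complex_of_real (\<psi> s ((1 / eps) *\<^sub>R Y (snd s))) - tsum xs s ((1 / eps) *\<^sub>R Y (snd s))) \<le> e"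
          if "s \<in> cbox (a1, a2) (b1, b2)" for s
        proof -
          have "norm (complex_of_real (\<psi> s ((1 / eps) *\<^sub>R Y (snd s))) - tsum xs s ((1 / eps) *\<^sub>R Y (snd s)))
              = \<bar>\<psi> s ((1 / eps) *\<^sub>R Y (snd s)) - P s ((1 / eps) *\<^sub>R Y (snd s))\<bar>"
            by (simp add: xs(2) flip: of_real_diff)
          also have "\<dots> < e" using xs(3) that D_def by simp
          finally show ?thesis by simp
        qed
        show ?thesis using has_integral_bound[OF _ hi pw] e unfolding C_def D_def by simp
      qed
      finally show ?thesis .
    qed
    have MT: "norm (complex_of_real (integral D (\<lambda>s. integral cube (\<psi> s))) - Mn) \<le> e * C"
    proof -
      have iT': "(\<lambda>s. complex_of_real (integral cube (\<psi> s))) integrable_on D"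
        unfolding D_def by (rule integrable_continuous) (intro continuous_intros contT[unfolded D_def])
      have iM: "tmean xs integrable_on D"
        unfolding D_def by (rule integrable_continuous) (rule continuous_tmean[OF xs(1), unfolded D_def])
      have "complex_of_real (integral D (\<lambda>s. integral cube (\<psi> s))) = integral D (complex_of_real \<circ> (\<lambda>s. integral cube (\<psi> s)))"
        by (rule integral_linear[OF intT bounded_linear_of_real, symmetric])
      then have eq: "complex_of_real (integral D (\<lambda>s. integral cube (\<psi> s))) - Mn =
          integral D (\<lambda>s. complex_of_real (integral cube (\<psi> s)) - tmean xs s)"
        unfolding Mn_def using integral_diff[OF iT' iM] by (simp add: o_def)
      have pw: "norm (complex_of_real (integral cube (\<psi> s)) - tmean xs s) \<le> e" if s: "s \<in> cbox (a1, a2) (b1, b2)" for s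
      proof -
        have sD: "s \<in> D" using s D_def by simp
        have v: "\<forall>p\<in>set xs. \<forall>i. snd p $ i \<in> \<int>" using xs(1) by (simp add: tvalid_def)
        have i1: "(\<lambda>y. complex_of_real (\<psi> s y)) integrable_on cube"
          using integrable_linear[OF intpsi[OF sD] bounded_linear_of_real] by (simp add: o_def)
        have i2: "(\<lambda>y. tsum xs s y) integrable_on cube"
          unfolding cube_def by (intro integrable_continuous continuous_tsum)
        have "complex_of_real (integral cube (\<psi> s)) = integral cube (complex_of_real \<circ> \<psi> s)"
          by (rule integral_linear[OF intpsi[OF sD] bounded_linear_of_real, symmetric])
        moreover have "tmean xs s = integral cube (\<lambda>y. tsum xs s y)"
          unfolding cube_def by (rule tsum_cube[OF v, symmetric])
        ultimately have "complex_of_real (integral cube (\<psi> s)) - tmean xs s = integral cube (\<lambda>y. complex_of_real (\<psi> s y) - tsum xs s y)"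
          using integral_diff[OF i1 i2] by (simp add: o_def)
        also have "norm \<dots> \<le> e"
        proof -
          have hi: "((\<lambda>y. complex_of_real (\<psi> s y) - tsum xs s y) has_integral integral cube (\<lambda>y. complex_of_real (\<psi> s y) - tsum xs s y)) (cbox 0 One)"
            using integrable_integral[OF integrable_diff[OF i1 i2]] unfolding cube_def .
          have "norm (complex_of_real (\<psi> s y) - tsum xs s y) \<le> e" for y
          proof -
            have "norm (complex_of_real (\<psi> s y) - tsum xs s y) = \<bar>\<psi> s y - P s y\<bar>"
              by (simp add: xs(2) flip: of_real_diff)
            also have "\<dots> < e" using xs(3) sD by simp
            finally show ?thesis by simp
          qed
          then show ?thesis using has_integral_bound[OF _ hi] e by simp
        qed
        finally show ?thesis .
      qed
      have hi: "((\<lambda>s. complex_of_real (integral cube (\<psi> s)) - tmean xs s) has_integral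
          integral D (\<lambda>s. complex_of_real (integral cube (\<psi> s)) - tmean xs s)) (cbox (a1, a2) (b1, b2))"
        using integrable_integral[OF integrable_diff[OF iT' iM]] unfolding D_def .
      show ?thesis unfolding eq using has_integral_bound[OF _ hi pw] e unfolding C_def D_def by simp
    qed
    show "eventually (\<lambda>eps. \<bar>integral D (\<lambda>s. \<psi> s ((1 / eps) *\<^sub>R Y (snd s))) - integral D (\<lambda>s. integral cube (\<psi> s))\<bar> < eta) (at_right 0)"
      using evB
    proof (rule eventually_mono)
      fix eps assume b: "norm (B eps - Mn) < eta / 3"
      let ?A = "integral D (\<lambda>s. \<psi> s ((1 / eps) *\<^sub>R Y (snd s)))"
      let ?T = "integral D (\<lambda>s. integral cube (\<psi> s))"
      have "\<bar>?A - ?T\<bar> = norm (complex_of_real ?A - complex_of_real ?T)"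
        by (simp flip: of_real_diff)
      also have "\<dots> \<le> norm (complex_of_real ?A - B eps) + norm (B eps - Mn) + norm (complex_of_real ?T - Mn)"
      proof -
        have e: "complex_of_real ?A - complex_of_real ?T = (complex_of_real ?A - B eps) + (B eps - Mn) - (complex_of_real ?T - Mn)"
          by (simp add: algebra_simps)
        show ?thesis unfolding e
          by (rule order_trans[OF norm_triangle_ineq4 add_right_mono[OF norm_triangle_ineq]])
      qed
      also have "\<dots> < e * C + eta / 3 + e * C" using AB[of eps] b MT by linarith
      also have "\<dots> < eta" using eC by linarith
      finally show "\<bar>?A - ?T\<bar> < eta" .
    qed
  qed
qed


end
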